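(* Let $b_{n,p}$ denote the number of permutations of length $n$ in the basis $\mathcal{B}_p$ (equivalently, by the structural characterization, the basis permutations of length $n$ with exactly $p+1$ non-left-to-right-maxima). Then $b_{n,p}=0$ if $p<(n-2)/2$ or $p>n-2$, $b_{n,n-2}=(n-1)!$ for $n>1$, and for $p<n-2$, $$b_{n,p}=\sum_{\ell=0}^{p-1}(\ell+1)!\binom{n-2}{\ell}\,b_{n-\ell-2,\,p-\ell-1}.$$
   Context: A right-jump transforms $\sigma=\sigma_1\cdots\sigma_n$ into $\sigma_1\cdots\sigma_{i-1}\sigma_{i+1}\cdots\sigma_j\sigma_i\sigma_{j+1}\cdots\sigma_n$ for some $1\le i<j\le n$. A left-to-right maximum of $\sigma$ is an entry $\sigma_i$ with $\sigma_k<\sigma_i$ for all $k<i$; every other entry is a non-left-to-right-maximum. A permutation $\pi$ is a pattern of $\sigma$ (written $\pi\prec\sigma$) if some subsequence of $\sigma$ is order-isomorphic to $\pi$. $\mathcal{C}_p$ is the set of all permutations (of any length $n$) obtainable from the identity $12\cdots n$ by at most $p$ right-jumps. The basis $\mathcal{B}_p$ is the set of permutations $\sigma\notin\mathcal{C}_p$ such that every pattern $\pi\prec\sigma$ with $\pi\ne\sigma$ lies in $\mathcal{C}_p$. *)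

theory Defs
  imports Main "HOL-Library.Sublist"
begin

definition is_perm :: "nat list \<Rightarrow> bool" where
  "is_perm \<sigma> \<longleftrightarrow> distinct \<sigma> \<and> set \<sigma> = {1..length \<sigma>}"

text \<open>Right-jump with 0-based positions i < j < n: the entry at position i is moved
  to just after the entry at position j.\<close>
definition right_jump :: "nat list \<Rightarrow> nat \<Rightarrow> nat \<Rightarrow> nat list" where
  "right_jump \<sigma> i j = take i \<sigma> @ take (j - i) (drop (Suc i) \<sigma>) @ [\<sigma> ! i] @ drop (Suc j) \<sigma>"

definition rjump_step :: "nat list \<Rightarrow> nat list \<Rightarrow> bool" where
  "rjump_step \<sigma> \<tau> \<longleftrightarrow> (\<exists>i j. i < j \<and> j < length \<sigma> \<and> \<tau> = right_jump \<sigma> i j)"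

definition C :: "nat \<Rightarrow> nat list set" where
  "C p = {\<sigma>. \<exists>n k. k \<le> p \<and> (rjump_step ^^ k) [1..<Suc n] \<sigma>}"

definition order_iso :: "nat list \<Rightarrow> nat list \<Rightarrow> bool" where
  "order_iso \<pi> \<tau> \<longleftrightarrow> length \<pi> = length \<tau> \<and>
     (\<forall>i<length \<pi>. \<forall>j<length \<pi>. \<pi> ! i < \<pi> ! j \<longleftrightarrow> \<tau> ! i < \<tau> ! j)"

definition pattern :: "nat list \<Rightarrow> nat list \<Rightarrow> bool" where
  "pattern \<pi> \<sigma> \<longleftrightarrow> (\<exists>\<tau>. subseq \<tau> \<sigma> \<and> order_iso \<pi> \<tau>)"

definition basis :: "nat \<Rightarrow> nat list set" where
  "basis p = {\<sigma>. is_perm \<sigma> \<and> \<sigma> \<notin> C p \<and>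
     (\<forall>\<pi>. is_perm \<pi> \<and> pattern \<pi> \<sigma> \<and> \<pi> \<noteq> \<sigma> \<longrightarrow> \<pi> \<in> C p)}"

definition b :: "nat \<Rightarrow> nat \<Rightarrow> nat" where
  "b n p = card {\<sigma> \<in> basis p. length \<sigma> = n}"

end

theory Submission
  imports Defs "HOL-Library.Multiset"
begin

fun nl :: "nat set \<Rightarrow> nat list \<Rightarrow> nat" where
  "nl P [] = 0"
| "nl P (x # xs) = (if \<exists>y\<in>P. x < y then 1 else 0) + nl (insert x P) xs"

definition nlm :: "nat list \<Rightarrow> nat" where "nlm xs = nl {} xs"

lemma nl_append: "nl P (xs @ ys) = nl P xs + nl (P \<union> set xs) ys"
  by (induction xs arbitrary: P) auto

lemma nl_mono: "P \<subseteq> Q \<Longrightarrow> nl P xs \<le> nl Q xs"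
proof (induction xs arbitrary: P Q)
  case (Cons x xs)
  have "nl (insert x P) xs \<le> nl (insert x Q) xs" using Cons.prems by (intro Cons.IH) auto
  moreover have "(\<exists>y\<in>P. x < y) \<Longrightarrow> (\<exists>y\<in>Q. x < y)" using Cons.prems by blast
  ultimately show ?case by auto
qed simp

lemma nl_cong: "(\<And>v. (\<exists>y\<in>P. v < y) = (\<exists>y\<in>Q. v < y)) \<Longrightarrow> nl P xs = nl Q xs"
proof (induction xs arbitrary: P Q)
  case (Cons x xs)
  have "nl (insert x P) xs = nl (insert x Q) xs"
    by (rule Cons.IH) (use Cons.prems in auto)
  then show ?case using Cons.prems[of x] by simp
qed simp

lemma nl_insert_small: "x < z \<Longrightarrow> z \<in> P \<Longrightarrow> nl (insert x P) xs = nl P xs"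
  by (rule nl_cong) (auto intro: less_trans)

lemma nl_le_length: "nl P xs \<le> length xs"
  by (induction xs arbitrary: P) (simp_all add: le_SucI)

lemma nl_all: "(\<forall>x\<in>set xs. \<exists>y\<in>P. x < y) \<Longrightarrow> nl P xs = length xs"
proof (induction xs arbitrary: P)
  case (Cons x xs)
  have "nl (insert x P) xs = length xs" by (rule Cons.IH) (use Cons.prems in auto)
  then show ?case using Cons.prems by auto
qed simp

lemma nl_less_length:
  assumes "m \<in> set xs" "\<forall>y\<in>P. \<not> m < y" "\<forall>y\<in>set xs. \<not> m < y"
  shows "nl P xs < length xs"
  using assms
proof (induction xs arbitrary: P)
  case (Cons a xs)
  show ?case
  proof (cases "a = m")
    case True
    then show ?thesis using Cons.prems nl_le_length[of "insert a P" xs] by auto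
  next
    case False
    then have "m \<in> set xs" using Cons.prems by auto
    have "nl (insert a P) xs < length xs"
      by (rule Cons.IH) (use Cons.prems \<open>m \<in> set xs\<close> in auto)
    then show ?thesis by simp
  qed
qed simp

lemma nl_less_length_imp:
  assumes "nl P xs < length xs" shows "\<exists>x\<in>set xs. \<forall>y\<in>P. \<not> x < y"
  using assms nl_all by (metis less_irrefl)

lemma nl_pos_split:
  assumes "0 < nl P xs"
  shows "\<exists>u x w. xs = u @ x # w \<and> (\<exists>y\<in>P \<union> set u. x < y)"
  using assms
proof (induction xs arbitrary: P)
  case (Cons a xs)
  show ?case
  proof (cases "\<exists>y\<in>P. a < y")
    case True
    then show ?thesis by (intro exI[of _ "[]"]) auto
  next
    case False
    then have "0 < nl (insert a P) xs" using Cons.prems by simp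
    from Cons.IH[OF this] obtain u x w where "xs = u @ x # w" "\<exists>y\<in>insert a P \<union> set u. x < y"
      by blast
    then show ?thesis by (intro exI[of _ "a # u"]) auto
  qed
qed simp

lemma nl_zero_bound: "nl P xs = 0 \<Longrightarrow> \<forall>x\<in>set xs. \<forall>y\<in>P. \<not> x < y"
  by (induction xs arbitrary: P) (auto split: if_splits)

lemma nl_zero_sorted: "nl P xs = 0 \<Longrightarrow> sorted xs"
proof (induction xs arbitrary: P)
  case (Cons a xs)
  then have h: "nl (insert a P) xs = 0" by (simp split: if_splits)
  from nl_zero_bound[OF h] have "\<forall>x\<in>set xs. a \<le> x" by auto
  with Cons.IH[OF h] show ?case by simp
qed simp

lemma nl_sorted_zero: "sorted xs \<Longrightarrow> \<forall>y\<in>P. \<forall>x\<in>set xs. y \<le> x \<Longrightarrow> nl P xs = 0"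
proof (induction xs arbitrary: P)
  case (Cons a xs)
  have "nl (insert a P) xs = 0" by (rule Cons.IH) (use Cons.prems in auto)
  then show ?case using Cons.prems by (auto simp: not_less)
qed simp

lemma nlm_snoc: "nlm (xs @ [x]) = nlm xs + (if \<exists>y\<in>set xs. x < y then 1 else 0)"
  unfolding nlm_def by (simp add: nl_append)


lemma rj_decomp:
  assumes "i < j" "j < length s"
  shows "s = take i s @ s ! i # take (j - i) (drop (Suc i) s) @ drop (Suc j) s"
proof -
  have e1: "drop (Suc i) s = take (j - i) (drop (Suc i) s) @ drop (j - i) (drop (Suc i) s)"
    by (rule append_take_drop_id[symmetric])
  have "j - i + Suc i = Suc j" using assms by simp
  then have e2: "drop (j - i) (drop (Suc i) s) = drop (Suc j) s" by (simp only: drop_drop)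
  have e: "drop (Suc i) s = take (j - i) (drop (Suc i) s) @ drop (Suc j) s"
    using e1 unfolding e2 .
  have h: "s = take i s @ s ! i # drop (Suc i) s"
    by (rule id_take_nth_drop) (use assms in simp)
  have "take i s @ s ! i # drop (Suc i) s = take i s @ s ! i # (take (j - i) (drop (Suc i) s) @ drop (Suc j) s)"
    using e by (rule arg_cong[where f="\<lambda>z. take i s @ s ! i # z"])
  with h show ?thesis by (rule trans)
qed

lemma perm_mset: "mset xs = mset ys \<Longrightarrow> is_perm xs \<Longrightarrow> is_perm ys"
  unfolding is_perm_def
  by (metis mset_eq_imp_distinct_iff mset_eq_length mset_eq_setD)

lemma rj_props:
  assumes "i < j" "j < length s"
  shows "is_perm s \<Longrightarrow> is_perm (right_jump s i j)" "length (right_jump s i j) = length s"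
    "nlm (right_jump s i j) \<le> Suc (nlm s)"
proof -
  define a x c d where "a = take i s" "x = s ! i" "c = take (j - i) (drop (Suc i) s)" "d = drop (Suc j) s"
  have s: "s = a @ x # c @ d" using rj_decomp[OF assms] unfolding a_x_c_d_def by simp
  have r: "right_jump s i j = a @ c @ x # d" unfolding right_jump_def a_x_c_d_def by simp
  have m: "mset (right_jump s i j) = mset s"
  proof -
    have "mset (right_jump s i j) = mset (a @ c @ x # d)" using r by simp
    also have "\<dots> = mset (a @ x # c @ d)" by simp
    also have "\<dots> = mset s" using s by simp
    finally show ?thesis .
  qed
  show "is_perm s \<Longrightarrow> is_perm (right_jump s i j)" using perm_mset[OF m[symmetric]] .
  show "length (right_jump s i j) = length s" using mset_eq_length[OF m] .
  have "nl (set a) c \<le> nl (insert x (set a)) c" by (rule nl_mono) auto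
  moreover have "nl (set a \<union> set c) [x] \<le> 1" by simp
  ultimately have "nlm (a @ c @ x # d) \<le> Suc (nlm (a @ x # c @ d))"
    unfolding nlm_def by (simp add: nl_append)
  moreover have "nlm (right_jump s i j) = nlm (a @ c @ x # d)" using r by simp
  moreover have "nlm s = nlm (a @ x # c @ d)" using s by simp
  ultimately show "nlm (right_jump s i j) \<le> Suc (nlm s)" by linarith
qed

lemma identity_nlm: "nlm [1..<Suc n] = 0" "is_perm [1..<Suc n]"
  unfolding nlm_def is_perm_def by (auto simp del: upt_Suc intro: nl_sorted_zero)

lemma C_sub: "(rjump_step ^^ k) [1..<Suc n] s \<Longrightarrow> is_perm s \<and> nlm s \<le> k"
proof (induction k arbitrary: s)
  case 0
  then have "s = [1..<Suc n]" by simp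
  then show ?case using identity_nlm by simp
next
  case (Suc k)
  from relpowp_Suc_E[OF Suc.prems] obtain t where t: "(rjump_step ^^ k) [1..<Suc n] t" "rjump_step t s"
    by blast
  from Suc.IH[OF t(1)] have "is_perm t" "nlm t \<le> k" by auto
  from t(2) obtain i j where "i < j" "j < length t" "s = right_jump t i j" unfolding rjump_step_def by blast
  with rj_props[of i j t] \<open>is_perm t\<close> \<open>nlm t \<le> k\<close> show ?case by auto
qed

lemma nlm_zero_perm: "is_perm s \<Longrightarrow> nlm s = 0 \<Longrightarrow> s = [1..<Suc (length s)]"
  unfolding is_perm_def nlm_def
  by (metis atLeastLessThanSuc_atLeastAtMost distinct_upt nl_zero_sorted set_upt sorted_distinct_set_unique sorted_upt)

lemma step_back:
  assumes "is_perm s" "nlm s = Suc k"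
  shows "\<exists>t. is_perm t \<and> length t = length s \<and> nlm t = k \<and> rjump_step t s"
proof -
  from nl_pos_split[of "{}" s] assms obtain u x w where uxw: "s = u @ x # w" "\<exists>y\<in>set u. x < y"
    unfolding nlm_def by auto
  have dist: "distinct s" using assms unfolding is_perm_def by auto
  define u1 u2 where "u1 = takeWhile (\<lambda>y. y < x) u" "u2 = dropWhile (\<lambda>y. y < x) u"
  have u: "u = u1 @ u2" unfolding u1_u2_def by simp
  have u1x: "\<forall>y\<in>set u1. y < x" unfolding u1_u2_def by (auto dest: set_takeWhileD)
  have "u2 \<noteq> []"
  proof
    assume "u2 = []"
    then have "u = u1" using u by simp
    with uxw(2) u1x show False by auto
  qed
  then obtain z u2' where z: "u2 = z # u2'" by (cases u2) auto
  have "\<not> z < x" using z unfolding u1_u2_def by (metis dropWhile_eq_Cons_conv)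
  moreover have "z \<noteq> x" using dist uxw(1) u z by auto
  ultimately have xz: "x < z" by simp
  define t where "t = u1 @ x # u2 @ w"
  have rj: "right_jump t (length u1) (length u) = s"
    unfolding right_jump_def t_def uxw(1) u by simp
  have mt: "mset t = mset s" unfolding t_def uxw(1) u by simp
  have pt: "is_perm t" using perm_mset[OF mt[symmetric] assms(1)] .
  have lt: "length t = length s" using mset_eq_length[OF mt] .
  have "rjump_step t s" unfolding rjump_step_def
    using rj \<open>u2 \<noteq> []\<close> u lt uxw(1) by (intro exI[of _ "length u1"] exI[of _ "length u"]) auto
  have a1: "nl (set u1) [x] = 0" using u1x by auto
  have a2: "nl (insert x (set u1)) u2 = nl (set u1) u2"
  proof -
    have "nl (insert z (insert x (set u1))) u2' = nl (insert z (set u1)) u2'"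
      using nl_insert_small[OF xz, of "insert z (set u1)" u2'] by (simp add: insert_commute)
    moreover have "\<not> (\<exists>y\<in>insert x (set u1). z < y)" using u1x xz by auto
    moreover have "\<not> (\<exists>y\<in>set u1. z < y)" using u1x xz by auto
    ultimately show ?thesis unfolding z by simp
  qed
  have a3: "nl (set u) [x] = 1" using uxw(2) by auto
  have "nlm t = nl {} u1 + nl (set u1) u2 + nl (insert x (set u)) w"
    unfolding nlm_def t_def using a1 a2 u by (simp add: nl_append insert_commute Un_commute)
  moreover have "nlm s = nl {} u1 + nl (set u1) u2 + 1 + nl (insert x (set u)) w"
    unfolding nlm_def uxw(1) using a3 u by (simp add: nl_append)
  ultimately have "nlm t = k" using assms(2) by simp
  then show ?thesis using pt lt \<open>rjump_step t s\<close> by blast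
qed

lemma C_sup: "is_perm s \<Longrightarrow> (rjump_step ^^ nlm s) [1..<Suc (length s)] s"
proof (induction "nlm s" arbitrary: s)
  case 0
  then show ?case using nlm_zero_perm[OF 0(2)] by simp
next
  case (Suc k)
  from step_back[OF Suc.prems Suc.hyps(2)[symmetric]] obtain t where
    t: "is_perm t" "length t = length s" "nlm t = k" "rjump_step t s" by blast
  from Suc.hyps(1)[of t] t have "(rjump_step ^^ k) [1..<Suc (length s)] t" by simp
  then show ?case using t(4) Suc.hyps(2) by (metis relpowp_Suc_I)
qed

lemma C_char: "C p = {s. is_perm s \<and> nlm s \<le> p}"
proof
  show "C p \<subseteq> {s. is_perm s \<and> nlm s \<le> p}" unfolding C_def using C_sub by fastforce
  show "{s. is_perm s \<and> nlm s \<le> p} \<subseteq> C p" unfolding C_def using C_sup by blast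
qed


subsection \<open>Patterns\<close>

definition del :: "nat \<Rightarrow> 'a list \<Rightarrow> 'a list" where
  "del i xs = take i xs @ drop (Suc i) xs"

definition good :: "nat list \<Rightarrow> bool" where
  "good s \<longleftrightarrow> (\<forall>i<length s. nlm (del i s) < nlm s)"

lemma nl_subseq: "subseq t s \<Longrightarrow> nl P t \<le> nl P s"
proof (induction s arbitrary: t P)
  case Nil
  then show ?case using list_emb_Nil2 by fastforce
next
  case (Cons y s)
  show ?case
  proof (cases t)
    case Nil
    then show ?thesis by simp
  next
    case (Cons x t')
    show ?thesis
    proof (cases "x = y \<and> subseq t' s")
      case True
      then show ?thesis using Cons.IH[of t' "insert y P"] Cons by simp
    next
      case False
      then have "subseq t s" using Cons.prems Cons by auto
      then have "nl P t \<le> nl P s" using Cons.IH by blast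
      also have "\<dots> \<le> nl (insert y P) s" by (rule nl_mono) auto
      also have "\<dots> \<le> nl P (y # s)" by simp
      finally show ?thesis .
    qed
  qed
qed

lemma nlm_subseq: "subseq t s \<Longrightarrow> nlm t \<le> nlm s"
  unfolding nlm_def by (rule nl_subseq)

lemma ex_set_take: "(\<exists>y\<in>set (take k xs). P y) \<longleftrightarrow> (\<exists>j<k. j < length xs \<and> P (xs ! j))"
proof
  assume "\<exists>y\<in>set (take k xs). P y"
  then obtain y where y: "y \<in> set (take k xs)" "P y" by blast
  from y(1) obtain j where j: "j < length (take k xs)" "take k xs ! j = y"
    unfolding in_set_conv_nth by blast
  then show "\<exists>j<k. j < length xs \<and> P (xs ! j)" using y(2) by (intro exI[of _ j]) auto
next
  assume "\<exists>j<k. j < length xs \<and> P (xs ! j)"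
  then obtain j where j: "j < k" "j < length xs" "P (xs ! j)" by blast
  then have "take k xs ! j \<in> set (take k xs)" by (intro nth_mem) simp
  then show "\<exists>y\<in>set (take k xs). P y" using j by auto
qed

lemma nlm_iso:
  assumes "order_iso p t" shows "nlm p = nlm t"
proof -
  have L: "length p = length t" using assms unfolding order_iso_def by simp
  have "k \<le> length p \<Longrightarrow> nlm (take k p) = nlm (take k t)" for k
  proof (induction k)
    case 0
    then show ?case by simp
  next
    case (Suc k)
    then have k: "k < length p" by simp
    have e: "(\<exists>y\<in>set (take k p). p ! k < y) \<longleftrightarrow> (\<exists>y\<in>set (take k t). t ! k < y)"
      unfolding ex_set_take using assms k L unfolding order_iso_def by auto
    show ?case using Suc k L e by (simp add: take_Suc_conv_app_nth nlm_snoc)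
  qed
  from this[of "length p"] L show ?thesis by simp
qed

lemma rank_exists:
  fixes A :: "nat set"
  assumes "finite A"
  shows "\<exists>r. (\<forall>a\<in>A. \<forall>b\<in>A. a < b \<longrightarrow> r a < r b) \<and> r ` A = {1..card A}"
proof -
  define r where "r v = card {w\<in>A. w \<le> v}" for v
  have mono: "r a < r b" if "a \<in> A" "b \<in> A" "a < b" for a b
  proof -
    have "b \<in> {w\<in>A. w \<le> b}" "b \<notin> {w\<in>A. w \<le> a}" using that by auto
    moreover have "{w\<in>A. w \<le> a} \<subseteq> {w\<in>A. w \<le> b}" using that by auto
    ultimately have "{w\<in>A. w \<le> a} \<subset> {w\<in>A. w \<le> b}" by blast
    then show ?thesis unfolding r_def by (rule psubset_card_mono[rotated]) (use assms in auto)
  qed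
  have inj: "inj_on r A"
    by (rule inj_onI) (metis linorder_neqE_nat mono less_irrefl)
  have sub: "r ` A \<subseteq> {1..card A}"
  proof
    fix y assume "y \<in> r ` A"
    then obtain a where a: "a \<in> A" "y = r a" by blast
    have "{w\<in>A. w \<le> a} \<noteq> {}" using a by auto
    then have "1 \<le> r a" unfolding r_def using assms by (simp add: Suc_leI card_gt_0_iff)
    moreover have "r a \<le> card A" unfolding r_def using assms by (intro card_mono) auto
    ultimately show "y \<in> {1..card A}" using a by simp
  qed
  have "card (r ` A) = card {1..card A}" using card_image[OF inj] by simp
  then have "r ` A = {1..card A}" using sub by (intro card_subset_eq) auto
  then show ?thesis using mono by blast
qed

lemma std_exists:
  assumes "distinct t" shows "\<exists>p. is_perm p \<and> order_iso p t"
proof -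
  obtain r where r: "\<forall>a\<in>set t. \<forall>b\<in>set t. a < b \<longrightarrow> r a < r b" "r ` set t = {1..card (set t)}"
    using rank_exists[of "set t"] by auto
  have iff: "r a < r b \<longleftrightarrow> a < b" if "a \<in> set t" "b \<in> set t" for a b
    using r(1) that by (metis linorder_neqE_nat less_asym less_irrefl)
  have inj: "inj_on r (set t)" by (rule inj_onI) (metis iff less_irrefl linorder_neqE_nat)
  define p where "p = map r t"
  have "is_perm p" unfolding is_perm_def p_def
    using r(2) distinct_card[OF assms] inj assms by (simp add: distinct_map)
  moreover have "order_iso p t" unfolding order_iso_def p_def using iff by auto
  ultimately show ?thesis by blast
qed

lemma perm_nth_card:
  assumes "is_perm s" "i < length s"
  shows "s ! i = card {j. j < length s \<and> s ! j \<le> s ! i}"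
proof -
  have d: "distinct s" and st: "set s = {1..length s}" using assms unfolding is_perm_def by auto
  have "(!) s ` {j. j < length s \<and> s ! j \<le> s ! i} = {w \<in> set s. w \<le> s ! i}"
    by (auto simp: in_set_conv_nth)
  also have "\<dots> = {1..s ! i}" using st assms(2) nth_mem[OF assms(2)] by auto
  finally have "card ((!) s ` {j. j < length s \<and> s ! j \<le> s ! i}) = s ! i" by simp
  moreover have "inj_on ((!) s) {j. j < length s \<and> s ! j \<le> s ! i}"
    by (rule inj_on_nth[OF d]) auto
  ultimately show ?thesis by (simp add: card_image)
qed

lemma perm_iso_eq:
  assumes "is_perm p" "is_perm s" "order_iso p s" shows "p = s"
proof (rule nth_equalityI)
  show L: "length p = length s" using assms(3) unfolding order_iso_def by simp
  fix i assume i: "i < length p"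
  have "{j. j < length p \<and> p ! j \<le> p ! i} = {j. j < length s \<and> s ! j \<le> s ! i}"
    using assms(3) i L unfolding order_iso_def by (auto simp: not_less[symmetric])
  then show "p ! i = s ! i"
    using perm_nth_card[OF assms(1) i] perm_nth_card[OF assms(2)] i L by simp
qed

lemma del_props:
  assumes "i < length s"
  shows "length (del i s) = length s - 1" "subseq (del i s) s"
    "distinct s \<Longrightarrow> distinct (del i s)" "set (del i s) \<subseteq> set s"
proof -
  have s: "s = take i s @ s ! i # drop (Suc i) s" using id_take_nth_drop[OF assms] .
  show "length (del i s) = length s - 1" unfolding del_def using assms by simp
  have "subseq (drop (Suc i) s) ([s ! i] @ drop (Suc i) s)"
    by (rule subseq_drop_many) (rule subseq_order.order_refl)
  then have "subseq (take i s @ drop (Suc i) s) (take i s @ s ! i # drop (Suc i) s)"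
    unfolding subseq_append' by simp
  then show sub: "subseq (del i s) s" unfolding del_def using s by simp
  show "distinct (del i s)" if d: "distinct s"
  proof -
    have "distinct (take i s @ s ! i # drop (Suc i) s)"
      using d s by (rule back_subst[where P=distinct])
    then show ?thesis unfolding del_def by auto
  qed
  show "set (del i s) \<subseteq> set s" unfolding del_def by (auto dest: in_set_takeD in_set_dropD)
qed

lemma del_nonlrmax:
  assumes "\<exists>y\<in>set u. x < y"
  shows "nlm (del (length u) (u @ x # w)) + 1 = nlm (u @ x # w)"
proof -
  have "del (length u) (u @ x # w) = u @ w" unfolding del_def by simp
  moreover have "nl (insert x (set u)) w = nl (set u) w"
    using assms nl_insert_small by blast
  ultimately show ?thesis using assms unfolding nlm_def by (simp add: nl_append)
qed

lemma subseq_shorter: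
  "subseq t s \<Longrightarrow> length t < length s \<Longrightarrow> \<exists>i<length s. subseq t (del i s)"
proof (induction s arbitrary: t)
  case Nil
  then show ?case by simp
next
  case (Cons y s)
  have d0: "del 0 (y # s) = s" unfolding del_def by simp
  have dS: "del (Suc i) (y # s) = y # del i s" for i unfolding del_def by simp
  show ?case
  proof (cases "subseq t s")
    case True
    then show ?thesis using d0 by (intro exI[of _ 0]) auto
  next
    case False
    then obtain t' where t: "t = y # t'" "subseq t' s" using Cons.prems(1)
      by (cases t) (auto split: if_splits)
    then have "length t' < length s" using Cons.prems by simp
    from Cons.IH[OF t(2) this] obtain i where "i < length s" "subseq t' (del i s)" by blast
    then show ?thesis using t dS by (intro exI[of _ "Suc i"]) auto
  qed
qed

lemma basis_char: "basis p = {s. is_perm s \<and> nlm s = Suc p \<and> good s}"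
proof (intro set_eqI iffI)
  fix s assume "s \<in> basis p"
  then have ps: "is_perm s" and nC: "s \<notin> C p"
    and cl: "\<And>q. is_perm q \<Longrightarrow> pattern q s \<Longrightarrow> q \<noteq> s \<Longrightarrow> q \<in> C p"
    unfolding basis_def by auto
  have ge: "Suc p \<le> nlm s" using nC ps unfolding C_char by auto
  have dist: "distinct s" using ps unfolding is_perm_def by simp
  have dl: "nlm (del i s) \<le> p" if i: "i < length s" for i
  proof -
    have "distinct (del i s)" using del_props[OF i] dist by simp
    from std_exists[OF this] obtain q where q: "is_perm q" "order_iso q (del i s)" by blast
    have "pattern q s" unfolding pattern_def using q(2) del_props(2)[OF i] by blast
    moreover have "q \<noteq> s" using q(2) del_props(1)[OF i] i unfolding order_iso_def by auto
    ultimately have "q \<in> C p" using cl q(1) by blast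
    then show ?thesis using nlm_iso[OF q(2)] unfolding C_char by simp
  qed
  from nl_pos_split[of "{}" s] ge obtain u x w where uxw: "s = u @ x # w" "\<exists>y\<in>set u. x < y"
    unfolding nlm_def by auto
  have "nlm (del (length u) s) + 1 = nlm s" using del_nonlrmax[OF uxw(2)] uxw(1) by simp
  moreover have "nlm (del (length u) s) \<le> p" using dl uxw(1) by simp
  ultimately have eq: "nlm s = Suc p" using ge by simp
  have "good s" unfolding good_def using dl eq by (simp add: le_imp_less_Suc)
  then show "s \<in> {s. is_perm s \<and> nlm s = Suc p \<and> good s}" using ps eq by simp
next
  fix s assume "s \<in> {s. is_perm s \<and> nlm s = Suc p \<and> good s}"
  then have ps: "is_perm s" and eq: "nlm s = Suc p" and g: "good s" by auto
  have "s \<notin> C p" using eq unfolding C_char by simp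
  moreover have "q \<in> C p" if q: "is_perm q" "pattern q s" "q \<noteq> s" for q
  proof -
    from q(2) obtain t where t: "subseq t s" "order_iso q t" unfolding pattern_def by blast
    have "length t < length s"
    proof (rule ccontr)
      assume "\<not> length t < length s"
      then have "length t = length s" using list_emb_length[OF t(1)] by simp
      then have "t = s" using subseq_same_length t(1) by blast
      then have "q = s" using perm_iso_eq[OF q(1) ps] t(2) by simp
      then show False using q(3) by simp
    qed
    from subseq_shorter[OF t(1) this] obtain i where i: "i < length s" "subseq t (del i s)" by blast
    have "nlm t \<le> nlm (del i s)" using nlm_subseq[OF i(2)] .
    also have "\<dots> < nlm s" using g i(1) unfolding good_def by blast
    finally have "nlm q \<le> p" using nlm_iso[OF t(2)] eq by simp
    then show ?thesis using q(1) unfolding C_char by simp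
  qed
  ultimately show "s \<in> basis p" using ps unfolding basis_def by blast
qed


lemma nlm_split:
  assumes "\<forall>x\<in>set t. x < M" "\<forall>x\<in>set S. x < M"
  shows "nlm (t @ M # S) = nlm t + length S"
proof -
  have "nl (insert M (set t)) S = length S" using assms(2) by (intro nl_all) auto
  moreover have "\<not> (\<exists>y\<in>set t. M < y)" using assms(1) by auto
  ultimately show ?thesis unfolding nlm_def by (simp add: nl_append)
qed

lemma del_app_left: "i < length t \<Longrightarrow> del i (t @ u) = del i t @ u"
  unfolding del_def by simp

lemma del_app_mid: "del (length t) (t @ M # S) = t @ S"
  unfolding del_def by simp

lemma del_app_right: "del (Suc (length t + k)) (t @ M # S) = t @ M # del k S"
  unfolding del_def by simp

lemma good_split:
  assumes d: "distinct (t @ M # S)" and lt: "\<forall>x\<in>set t. x < M" and ls: "\<forall>x\<in>set S. x < M"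
  shows "good (t @ M # S) \<longleftrightarrow> good t \<and> (\<exists>s\<in>set S. \<forall>x\<in>set t. x < s)"
proof -
  have N: "nlm (t @ M # S) = nlm t + length S" using nlm_split[OF lt ls] .
  have A: "nlm (del i (t @ M # S)) = nlm (del i t) + length S" if i: "i < length t" for i
  proof -
    have "\<forall>x\<in>set (del i t). x < M" using del_props(4)[OF i] lt by blast
    then show ?thesis using del_app_left[OF i, of "M # S"] nlm_split ls by simp
  qed
  have B: "nlm (del (length t) (t @ M # S)) = nlm t + nl (set t) S"
    unfolding del_app_mid nlm_def by (simp add: nl_append)
  have C: "nlm (del (Suc (length t + k)) (t @ M # S)) + 1 = nlm t + length S" if k: "k < length S" for k
  proof -
    have "\<forall>x\<in>set (del k S). x < M" using del_props(4)[OF k] ls by blast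
    then have "nlm (t @ M # del k S) = nlm t + length (del k S)" using nlm_split lt by blast
    then show ?thesis unfolding del_app_right using del_props(1)[OF k] k by simp
  qed
  have E: "nl (set t) S < length S \<longleftrightarrow> (\<exists>s\<in>set S. \<forall>x\<in>set t. x < s)"
  proof
    assume "nl (set t) S < length S"
    from nl_less_length_imp[OF this] obtain s where s: "s \<in> set S" "\<forall>y\<in>set t. \<not> s < y" by blast
    have "\<forall>x\<in>set t. x \<noteq> s" using d s(1) by auto
    then show "\<exists>s\<in>set S. \<forall>x\<in>set t. x < s" using s by (metis linorder_neqE_nat)
  next
    assume "\<exists>s\<in>set S. \<forall>x\<in>set t. x < s"
    then obtain s where s: "s \<in> set S" "\<forall>x\<in>set t. x < s" by blast
    define m where "m = Max (set S)"
    have m: "m \<in> set S" "\<forall>y\<in>set S. y \<le> m" unfolding m_def using s(1)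
      by (auto intro: Max_in)
    have "s \<le> m" using m s by auto
    then have "\<forall>y\<in>set t. \<not> m < y" using s(2) by auto
    moreover have "\<forall>y\<in>set S. \<not> m < y" using m by auto
    ultimately show "nl (set t) S < length S" using nl_less_length[OF m(1)] by blast
  qed
  show ?thesis
  proof
    assume g: "good (t @ M # S)"
    have "good t" unfolding good_def
    proof (intro allI impI)
      fix i assume i: "i < length t"
      have "nlm (del i (t @ M # S)) < nlm (t @ M # S)" using g i unfolding good_def by simp
      then show "nlm (del i t) < nlm t" using A[OF i] N by simp
    qed
    moreover have "nlm (del (length t) (t @ M # S)) < nlm (t @ M # S)" using g unfolding good_def by simp
    then have "nl (set t) S < length S" using B N by simp
    ultimately show "good t \<and> (\<exists>s\<in>set S. \<forall>x\<in>set t. x < s)" using E by blast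
  next
    assume h: "good t \<and> (\<exists>s\<in>set S. \<forall>x\<in>set t. x < s)"
    then have gt: "good t" and e: "nl (set t) S < length S" using E by auto
    show "good (t @ M # S)" unfolding good_def
    proof (intro allI impI)
      fix i assume i: "i < length (t @ M # S)"
      consider "i < length t" | "i = length t" | k where "k < length S" "i = Suc (length t + k)"
      proof -
        assume c1: "i < length t \<Longrightarrow> thesis" and c2: "i = length t \<Longrightarrow> thesis"
          and c3: "\<And>k. k < length S \<Longrightarrow> i = Suc (length t + k) \<Longrightarrow> thesis"
        show thesis
        proof (cases "i < length t")
          case True then show ?thesis by (rule c1)
        next
          case False
          show ?thesis
          proof (cases "i = length t")
            case True then show ?thesis by (rule c2)
          next
            case F2: False
            show ?thesis
              by (rule c3[of "i - Suc (length t)"]) (use i False F2 in simp_all)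
          qed
        qed
      qed
      then show "nlm (del i (t @ M # S)) < nlm (t @ M # S)"
      proof cases
        case 1
        then show ?thesis using A[OF 1] N gt unfolding good_def by simp
      next
        case 2
        then show ?thesis using B N e by simp
      next
        case 3
        then show ?thesis using C[OF 3(1)] N by simp
      qed
    qed
  qed
qed


subsection \<open>Counting\<close>

definition Gs :: "nat set \<Rightarrow> nat \<Rightarrow> nat list set" where
  "Gs A q = {s. distinct s \<and> set s = A \<and> good s \<and> nlm s = q}"

definition g :: "nat \<Rightarrow> nat \<Rightarrow> nat" where
  "g n q = card (Gs {1..n} q)"

definition smono :: "nat set \<Rightarrow> (nat \<Rightarrow> nat) \<Rightarrow> bool" where
  "smono A h \<longleftrightarrow> (\<forall>a\<in>A. \<forall>b\<in>A. a < b \<longrightarrow> h a < h b)"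

lemma smono_iff: "smono A h \<Longrightarrow> u \<in> A \<Longrightarrow> v \<in> A \<Longrightarrow> h u < h v \<longleftrightarrow> u < v"
  unfolding smono_def by (metis linorder_neqE_nat less_asym less_irrefl)

lemma smono_inj: "smono A h \<Longrightarrow> inj_on h A"
  by (rule inj_onI) (metis smono_iff less_irrefl linorder_neqE_nat)

lemma nl_map: "smono A h \<Longrightarrow> P \<subseteq> A \<Longrightarrow> set xs \<subseteq> A \<Longrightarrow> nl (h ` P) (map h xs) = nl P xs"
proof (induction xs arbitrary: P)
  case (Cons x xs)
  have "nl (h ` insert x P) (map h xs) = nl (insert x P) xs" using Cons by (intro Cons.IH) auto
  moreover have "(\<exists>y\<in>h ` P. h x < y) \<longleftrightarrow> (\<exists>y\<in>P. x < y)"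
    using Cons.prems smono_iff[OF Cons.prems(1)] by auto
  ultimately show ?case by simp
qed simp

lemma nlm_map: "smono A h \<Longrightarrow> set xs \<subseteq> A \<Longrightarrow> nlm (map h xs) = nlm xs"
  unfolding nlm_def using nl_map[of A h "{}" xs] by simp

lemma del_map: "del i (map h xs) = map h (del i xs)"
  unfolding del_def by (simp add: take_map drop_map)

lemma good_map: "smono A h \<Longrightarrow> set s \<subseteq> A \<Longrightarrow> good (map h s) \<longleftrightarrow> good s"
proof -
  assume h: "smono A h" "set s \<subseteq> A"
  have "nlm (map h (del i s)) = nlm (del i s)" if "i < length s" for i
    using nlm_map[OF h(1)] del_props(4)[OF that] h(2) by blast
  then show ?thesis unfolding good_def del_map using nlm_map[OF h] by simp
qed

lemma Gs_map: "smono A h \<Longrightarrow> s \<in> Gs A q \<Longrightarrow> map h s \<in> Gs (h ` A) q"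
proof -
  assume h: "smono A h" "s \<in> Gs A q"
  then have s: "distinct s" "set s = A" "good s" "nlm s = q" unfolding Gs_def by auto
  have "distinct (map h s)" using s smono_inj[OF h(1)] by (simp add: distinct_map)
  moreover have "good (map h s)" using good_map[OF h(1)] s by simp
  moreover have "nlm (map h s) = q" using nlm_map[OF h(1)] s by simp
  ultimately show ?thesis unfolding Gs_def using s by simp
qed

lemma finite_Gs: "finite A \<Longrightarrow> finite (Gs A q)"
proof -
  assume f: "finite A"
  have "Gs A q \<subseteq> {xs. set xs \<subseteq> A \<and> length xs = card A}"
    unfolding Gs_def using distinct_card by fastforce
  then show ?thesis using finite_lists_length_eq[OF f] finite_subset by blast
qed

lemma card_Gs: "finite A \<Longrightarrow> card (Gs A q) = g (card A) q"
proof -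
  assume f: "finite A"
  obtain r where r: "\<forall>a\<in>A. \<forall>b\<in>A. a < b \<longrightarrow> r a < r b" "r ` A = {1..card A}"
    using rank_exists[OF f] by blast
  have sr: "smono A r" using r(1) unfolding smono_def by blast
  define h where "h = inv_into A r"
  have "h ` (r ` A) = A" unfolding h_def using inv_into_image_cancel[OF smono_inj[OF sr], of A] by simp
  then have hA: "h ` {1..card A} = A" using r(2) by simp
  have hr: "r (h y) = y" if "y \<in> {1..card A}" for y
    unfolding h_def using r(2) that by (simp add: f_inv_into_f)
  have sh: "smono {1..card A} h" unfolding smono_def
  proof (intro ballI impI)
    fix a b assume ab: "a \<in> {1..card A}" "b \<in> {1..card A}" "a < b"
    have "h a \<in> A" "h b \<in> A" using ab hA by auto
    then show "h a < h b" using smono_iff[OF sr, of "h a" "h b"] hr ab by simp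
  qed
  have inj: "inj_on (map r) (Gs A q)"
  proof (rule inj_onI)
    fix x y assume "x \<in> Gs A q" "y \<in> Gs A q" "map r x = map r y"
    then show "x = y" using inj_on_map_eq_map[of r x y] smono_inj[OF sr] unfolding Gs_def by auto
  qed
  have "map r ` Gs A q = Gs {1..card A} q"
  proof
    show "map r ` Gs A q \<subseteq> Gs {1..card A} q"
    proof
      fix y assume "y \<in> map r ` Gs A q"
      then obtain x where x: "x \<in> Gs A q" "y = map r x" by blast
      from Gs_map[OF sr x(1)] have "map r x \<in> Gs (r ` A) q" .
      then show "y \<in> Gs {1..card A} q" using x(2) r(2) by simp
    qed
  next
    show "Gs {1..card A} q \<subseteq> map r ` Gs A q"
    proof
      fix s assume s: "s \<in> Gs {1..card A} q"
      have "map h s \<in> Gs A q" using Gs_map[OF sh s] hA by simp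
      moreover have "map r (map h s) = s"
      proof -
        have "set s = {1..card A}" using s unfolding Gs_def by simp
        then have "\<forall>y\<in>set s. (r \<circ> h) y = y" using hr by simp
        then have "map (r \<circ> h) s = s" by (intro map_idI) blast
        then show ?thesis by simp
      qed
      ultimately show "s \<in> map r ` Gs A q" by force
    qed
  qed
  then show ?thesis unfolding g_def using card_image[OF inj] by simp
qed

definition perms :: "nat set \<Rightarrow> nat list set" where
  "perms X = {S. distinct S \<and> set S = X}"

lemma card_perms: "finite X \<Longrightarrow> card (perms X) = fact (card X)"
proof -
  assume f: "finite X"
  have "perms X = {xs. length xs = card X \<and> distinct xs \<and> set xs \<subseteq> X}"
    unfolding perms_def using f by (auto simp: distinct_card) (metis card_subset_eq distinct_card)
  then have "card (perms X) = \<Prod>{card X - card X + 1 .. card X}"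
    using card_lists_distinct_length_eq[OF f, of "card X"] by simp
  then show ?thesis by (simp add: fact_prod)
qed

lemma finite_perms: "finite X \<Longrightarrow> finite (perms X)"
proof -
  assume f: "finite X"
  have "perms X \<subseteq> {xs. set xs \<subseteq> X \<and> length xs = card X}"
    unfolding perms_def using distinct_card by fastforce
  then show ?thesis using finite_lists_length_eq[OF f] finite_subset by blast
qed


lemma small_set:
  fixes n :: nat and B :: "nat set"
  assumes "B \<subseteq> {1..n-2}" "2 \<le> n"
  shows "n - 1 \<notin> B" "n \<notin> B" "\<forall>x\<in>B. x < n - 1" "\<forall>x\<in>B. x < n"
proof -
  have h: "x < n - 1" if "x \<in> B" for x
  proof -
    have "x \<le> n - 2" using assms(1) that by auto
    then show ?thesis using assms(2) by linarith
  qed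
  show "n - 1 \<notin> B" "n \<notin> B" "\<forall>x\<in>B. x < n - 1" "\<forall>x\<in>B. x < n" using h by fastforce+
qed

definition piece :: "nat \<Rightarrow> nat \<Rightarrow> nat \<Rightarrow> nat set \<Rightarrow> nat list set" where
  "piece n q l B0 = (\<lambda>(t, S). t @ n # S) ` (Gs ({1..n-2} - B0) (q - Suc l) \<times> perms (insert (n-1) B0))"

lemma Gs_sub:
  assumes n: "2 \<le> n" and sG: "s \<in> Gs {1..n} q"
  shows "\<exists>l<q. \<exists>B0. B0 \<subseteq> {1..n-2} \<and> card B0 = l \<and> s \<in> piece n q l B0"
proof -
  have d: "distinct s" and st: "set s = {1..n}" and gs: "good s" and ns: "nlm s = q"
    using sG unfolding Gs_def by auto
  have "n \<in> set s" using st n by simp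
  from split_list[OF this] obtain t S where s: "s = t @ n # S" by blast
  have dt: "distinct t" "distinct S" "n \<notin> set t" "n \<notin> set S" "set t \<inter> set S = {}"
    using d unfolding s by auto
  have sts: "set t \<union> set S = {1..n} - {n}" using st dt unfolding s by auto
  have lt: "\<forall>x\<in>set t. x < n"
  proof
    fix x assume "x \<in> set t" then have "x \<in> {1..n} - {n}" using sts by blast
    then show "x < n" by auto
  qed
  have ls: "\<forall>x\<in>set S. x < n"
  proof
    fix x assume "x \<in> set S" then have "x \<in> {1..n} - {n}" using sts by blast
    then show "x < n" by auto
  qed
  have g2: "good t" and ex: "\<exists>s\<in>set S. \<forall>x\<in>set t. x < s"
    using good_split[OF _ lt ls] d gs unfolding s by auto
  have q: "q = nlm t + length S" using nlm_split[OF lt ls] ns unfolding s by simp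
  have n1: "n - 1 \<in> set S"
  proof (rule ccontr)
    assume a: "n - 1 \<notin> set S"
    have "n - 1 \<in> {1..n} - {n}" using n by auto
    then have "n - 1 \<in> set t" using sts a by blast
    with ex obtain s' where "s' \<in> set S" "n - 1 < s'" by blast
    moreover have "s' < n" using ls \<open>s' \<in> set S\<close> by blast
    ultimately show False by simp
  qed
  define B0 where "B0 = set S - {n - 1}"
  have cB: "card B0 = length S - 1" unfolding B0_def using n1 dt(2) by (simp add: distinct_card)
  have LS: "1 \<le> length S" using n1 by (cases S) auto
  have B0sub: "B0 \<subseteq> {1..n-2}"
  proof
    fix x assume "x \<in> B0"
    then have "x \<in> set S" "x \<noteq> n - 1" unfolding B0_def by blast+
    then have "x \<in> {1..n} - {n}" "x \<noteq> n - 1" using sts by blast+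
    then have "1 \<le> x" "x \<le> n" "x \<noteq> n" "x \<noteq> n - 1" by simp_all
    then have "1 \<le> x" "x \<le> n - 2" by linarith+
    then show "x \<in> {1..n-2}" by simp
  qed
  have tset: "set t = {1..n-2} - B0"
  proof
    show "set t \<subseteq> {1..n-2} - B0"
    proof
      fix x assume x: "x \<in> set t"
      then have "x \<in> {1..n} - {n}" using sts by blast
      then have "1 \<le> x" "x \<le> n" "x \<noteq> n" by simp_all
      moreover have "x \<noteq> n - 1" using x n1 dt(5) by blast
      ultimately have "x \<in> {1..n-2}" by simp
      moreover have "x \<notin> B0" using x dt(5) unfolding B0_def by blast
      ultimately show "x \<in> {1..n-2} - B0" by blast
    qed
  next
    show "{1..n-2} - B0 \<subseteq> set t"
    proof
      fix y assume y: "y \<in> {1..n-2} - B0"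
      then have y1: "1 \<le> y" "y \<le> n - 2" "y \<notin> B0" by simp_all
      moreover have "y \<le> n" "y \<noteq> n" using y1 n by linarith+
      ultimately have "y \<in> {1..n} - {n}" by simp
      then have "y \<in> set t \<or> y \<in> set S" using sts by blast
      moreover have "y \<noteq> n - 1" using y1 n by linarith
      then have "y \<notin> set S" using y1(3) unfolding B0_def by blast
      ultimately show "y \<in> set t" by blast
    qed
  qed
  define l where "l = length S - 1"
  have Sl: "length S = Suc l" unfolding l_def using LS by simp
  have "t \<in> Gs ({1..n-2} - B0) (q - Suc l)" unfolding Gs_def using dt g2 tset q Sl by simp
  moreover have "S \<in> perms (insert (n-1) B0)" unfolding perms_def B0_def using dt n1 by auto
  ultimately have "(t, S) \<in> Gs ({1..n-2} - B0) (q - Suc l) \<times> perms (insert (n-1) B0)" by simp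
  then have "s \<in> piece n q l B0" unfolding piece_def s by (rule rev_image_eqI) simp
  moreover have "l < q" using q Sl by simp
  moreover have "card B0 = l" using cB l_def by simp
  ultimately show ?thesis using B0sub by blast
qed

lemma piece_sub:
  assumes n: "2 \<le> n" and l: "l < q" and B0: "B0 \<subseteq> {1..n-2}" "card B0 = l"
    and sp: "s \<in> piece n q l B0"
  shows "s \<in> Gs {1..n} q"
proof -
  obtain t S where s: "s = t @ n # S" and t: "t \<in> Gs ({1..n-2} - B0) (q - Suc l)"
    and S: "S \<in> perms (insert (n-1) B0)" using sp unfolding piece_def by auto
  have dt: "distinct t" "set t = {1..n-2} - B0" "good t" "nlm t = q - Suc l" using t unfolding Gs_def by auto
  have dS: "distinct S" "set S = insert (n-1) B0" using S unfolding perms_def by auto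
  have fB: "finite B0" using B0(1) finite_subset by blast
  have nB: "n - 1 \<notin> B0" using small_set[OF B0(1) n] by blast
  have LS: "length S = Suc l" using dS fB nB B0(2) by (metis card_insert_disjoint distinct_card)
  have lt: "\<forall>x\<in>set t. x < n" using dt(2) n by auto
  have lt1: "\<forall>x\<in>set t. x < n - 1" using dt(2) n by auto
  have ls: "\<forall>x\<in>set S. x < n" using dS(2) small_set[OF B0(1) n] n by auto
  have dis: "distinct (t @ n # S)" using dt dS B0(1) n nB lt ls by auto
  have "good (t @ n # S)" using good_split[OF dis lt ls] dt(3) lt1 dS(2) by auto
  moreover have "nlm (t @ n # S) = q" using nlm_split[OF lt ls] dt(4) LS l by simp
  moreover have "set (t @ n # S) = {1..n}"
  proof -
    have "set (t @ n # S) = ({1..n-2} - B0) \<union> insert n (insert (n-1) B0)" using dt dS by auto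
    also have "\<dots> = {1..n}"
    proof (intro set_eqI iffI)
      fix x assume "x \<in> ({1..n-2} - B0) \<union> insert n (insert (n-1) B0)"
      then consider "x \<in> {1..n-2}" | "x = n" | "x = n - 1" | "x \<in> B0" by blast
      then show "x \<in> {1..n}"
      proof cases
        case 1 then show ?thesis by simp arith
      next
        case 2 then show ?thesis using n by simp
      next
        case 3 then show ?thesis using n by simp
      next
        case 4 then have "x \<in> {1..n-2}" using B0(1) by blast
        then show ?thesis by simp arith
      qed
    next
      fix x assume x: "x \<in> {1..n}"
      show "x \<in> ({1..n-2} - B0) \<union> insert n (insert (n-1) B0)"
      proof (cases "x = n \<or> x = n - 1 \<or> x \<in> B0")
        case True then show ?thesis by blast
      next
        case False
        then have "1 \<le> x" "x \<le> n - 2" using x by auto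
        then show ?thesis using False by simp
      qed
    qed
    finally show ?thesis .
  qed
  ultimately show ?thesis unfolding Gs_def s using dis by simp
qed

lemma piece_elem:
  assumes "s \<in> piece n q l B0" "B0 \<subseteq> {1..n-2}" "2 \<le> n"
  obtains t S where "s = t @ n # S" "t \<in> Gs ({1..n-2} - B0) (q - Suc l)"
    "S \<in> perms (insert (n-1) B0)" "n \<notin> set t" "n \<notin> set S"
proof -
  from assms(1) obtain pr where pr: "pr \<in> Gs ({1..n-2} - B0) (q - Suc l) \<times> perms (insert (n-1) B0)"
    "s = (\<lambda>(t, S). t @ n # S) pr" unfolding piece_def by (rule imageE)
  obtain t S where tS: "pr = (t, S)" by (cases pr)
  have t: "t \<in> Gs ({1..n-2} - B0) (q - Suc l)" and S: "S \<in> perms (insert (n-1) B0)"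
    using pr(1) tS by auto
  have "n \<notin> {1..n-2}" using small_set[OF subset_refl assms(3)] by blast
  moreover have "set t \<subseteq> {1..n-2}" using t unfolding Gs_def by blast
  ultimately have "n \<notin> set t" by blast
  moreover have "n \<notin> set S"
  proof -
    have "set S = insert (n-1) B0" using S unfolding perms_def by blast
    moreover have "n \<noteq> n - 1" using assms(3) by simp
    moreover have "n \<notin> B0" using small_set[OF assms(2,3)] by blast
    ultimately show ?thesis by blast
  qed
  ultimately show ?thesis using that pr(2) tS t S by simp
qed

lemma piece_disj:
  assumes "B0 \<subseteq> {1..n-2}" "B1 \<subseteq> {1..n-2}" "B0 \<noteq> B1" "2 \<le> n"
  shows "piece n q l B0 \<inter> piece n q l' B1 = {}"
proof (rule ccontr)
  assume "piece n q l B0 \<inter> piece n q l' B1 \<noteq> {}"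
  then obtain s where s: "s \<in> piece n q l B0" "s \<in> piece n q l' B1" by blast
  obtain t S where tS: "s = t @ n # S" "S \<in> perms (insert (n-1) B0)" "n \<notin> set t" "n \<notin> set S"
    using piece_elem[OF s(1) assms(1,4)] by metis
  obtain t' S' where tS': "s = t' @ n # S'" "S' \<in> perms (insert (n-1) B1)"
    using piece_elem[OF s(2) assms(2,4)] by metis
  have "S = S'" using append_Cons_eq_iff[OF tS(3,4), of t' S'] tS(1) tS'(1) by simp
  then have e: "insert (n-1) B0 = insert (n-1) B1" using tS(2) tS'(2) unfolding perms_def by simp
  have "n - 1 \<notin> B0" "n - 1 \<notin> B1" using small_set[OF assms(1,4)] small_set[OF assms(2,4)] by blast+
  then have "B0 = B1" using e by (metis Diff_insert_absorb)
  then show False using assms(3) by simp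
qed

lemma card_piece:
  assumes n: "2 \<le> n" and B0: "B0 \<subseteq> {1..n-2}" "card B0 = l"
  shows "card (piece n q l B0) = g (n - 2 - l) (q - Suc l) * fact (Suc l)"
proof -
  have fB: "finite B0" using B0(1) finite_subset by blast
  have nB: "n - 1 \<notin> B0" "n \<notin> B0" using small_set[OF B0(1) n] by blast+
  have nA: "n \<notin> {1..n-2}" using small_set[OF subset_refl n] by blast
  have inj: "inj_on (\<lambda>(t, S). t @ n # S) (Gs ({1..n-2} - B0) (q - Suc l) \<times> perms (insert (n-1) B0))"
  proof (rule inj_onI, clarify)
    fix t S t' S'
    assume a: "t \<in> Gs ({1..n-2} - B0) (q - Suc l)" "S \<in> perms (insert (n-1) B0)"
      "t @ n # S = t' @ n # S'"
    have "set t \<subseteq> {1..n-2}" using a(1) unfolding Gs_def by blast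
    then have "n \<notin> set t" using nA by blast
    moreover have "n \<notin> set S" using a(2) nB n unfolding perms_def by auto
    ultimately show "t = t' \<and> S = S'" using append_Cons_eq_iff a(3) by metis
  qed
  have "card ({1..n-2} - B0) = n - 2 - l" using B0 by (simp add: card_Diff_subset fB)
  then have c1: "card (Gs ({1..n-2} - B0) (q - Suc l)) = g (n - 2 - l) (q - Suc l)"
    using card_Gs[of "{1..n-2} - B0"] by simp
  have c2: "card (perms (insert (n-1) B0)) = fact (Suc l)"
    using card_perms[of "insert (n-1) B0"] fB nB B0(2) by simp
  show ?thesis unfolding piece_def card_image[OF inj] card_cartesian_product c1 c2 ..
qed

lemma finite_piece: "finite B0 \<Longrightarrow> finite (piece n q l B0)"
  unfolding piece_def by (intro finite_imageI finite_cartesian_product finite_Gs finite_perms) auto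

lemma g_rec:
  assumes n: "2 \<le> n"
  shows "g n q = (\<Sum>l<q. ((n - 2) choose l) * (g (n - 2 - l) (q - Suc l) * fact (Suc l)))"
proof -
  define I where "I l = {B0. B0 \<subseteq> {1..n-2} \<and> card B0 = l}" for l
  have eq: "Gs {1..n} q = (\<Union>l\<in>{..<q}. \<Union>B0\<in>I l. piece n q l B0)"
  proof
    show "Gs {1..n} q \<subseteq> (\<Union>l\<in>{..<q}. \<Union>B0\<in>I l. piece n q l B0)"
    proof
      fix s assume "s \<in> Gs {1..n} q"
      from Gs_sub[OF n this] obtain l B0 where lb: "l < q" "B0 \<subseteq> {1..n-2}" "card B0 = l"
        "s \<in> piece n q l B0" by blast
      then have "B0 \<in> I l" unfolding I_def by blast
      then have "s \<in> (\<Union>B0\<in>I l. piece n q l B0)" using lb(4) by (rule UN_I)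
      moreover have "l \<in> {..<q}" using lb(1) by simp
      ultimately show "s \<in> (\<Union>l\<in>{..<q}. \<Union>B0\<in>I l. piece n q l B0)" by (rule UN_I[rotated])
    qed
  next
    show "(\<Union>l\<in>{..<q}. \<Union>B0\<in>I l. piece n q l B0) \<subseteq> Gs {1..n} q"
    proof
      fix s assume "s \<in> (\<Union>l\<in>{..<q}. \<Union>B0\<in>I l. piece n q l B0)"
      then obtain l B0 where "l < q" "B0 \<in> I l" "s \<in> piece n q l B0" by blast
      then show "s \<in> Gs {1..n} q" using piece_sub[OF n] unfolding I_def by blast
    qed
  qed
  have fI: "finite (I l)" for l unfolding I_def
    by (rule finite_subset[of _ "Pow {1..n-2}"]) auto
  have fP: "finite (piece n q l B0)" if "B0 \<in> I l" for B0 l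
  proof -
    have "B0 \<subseteq> {1..n-2}" using that unfolding I_def by blast
    then have "finite B0" using finite_subset by blast
    then show ?thesis by (rule finite_piece)
  qed
  have inner: "card (\<Union>B0\<in>I l. piece n q l B0) = ((n - 2) choose l) * (g (n - 2 - l) (q - Suc l) * fact (Suc l))" for l
  proof -
    have "card (\<Union>B0\<in>I l. piece n q l B0) = (\<Sum>B0\<in>I l. card (piece n q l B0))"
    proof (rule card_UN_disjoint[OF fI])
      show "\<forall>B0\<in>I l. finite (piece n q l B0)" using fP by blast
      show "\<forall>B0\<in>I l. \<forall>B1\<in>I l. B0 \<noteq> B1 \<longrightarrow> piece n q l B0 \<inter> piece n q l B1 = {}"
        unfolding I_def using piece_disj[OF _ _ _ n] by blast
    qed
    also have "\<dots> = (\<Sum>B0\<in>I l. g (n - 2 - l) (q - Suc l) * fact (Suc l))"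
      by (rule sum.cong) (simp_all add: I_def card_piece[OF n])
    also have "\<dots> = card (I l) * (g (n - 2 - l) (q - Suc l) * fact (Suc l))" by simp
    also have "card (I l) = (n - 2) choose l" unfolding I_def using n_subsets[of "{1..n-2}" l] by simp
    finally show ?thesis .
  qed
  have "card (Gs {1..n} q) = (\<Sum>l<q. card (\<Union>B0\<in>I l. piece n q l B0))"
    unfolding eq
  proof (rule card_UN_disjoint)
    show "finite {..<q}" by simp
    show "\<forall>l\<in>{..<q}. finite (\<Union>B0\<in>I l. piece n q l B0)" using fI fP by blast
    show "\<forall>l\<in>{..<q}. \<forall>l'\<in>{..<q}. l \<noteq> l' \<longrightarrow>
      (\<Union>B0\<in>I l. piece n q l B0) \<inter> (\<Union>B0\<in>I l'. piece n q l' B0) = {}"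
    proof (intro ballI impI)
      fix l l' :: nat assume "l \<noteq> l'"
      have "piece n q l B0 \<inter> piece n q l' B1 = {}" if "B0 \<in> I l" "B1 \<in> I l'" for B0 B1
      proof -
        have "B0 \<subseteq> {1..n-2}" "B1 \<subseteq> {1..n-2}" "card B0 = l" "card B1 = l'" using that unfolding I_def by blast+
        moreover then have "B0 \<noteq> B1" using \<open>l \<noteq> l'\<close> by blast
        ultimately show ?thesis using piece_disj[OF _ _ _ n] by blast
      qed
      then show "(\<Union>B0\<in>I l. piece n q l B0) \<inter> (\<Union>B0\<in>I l'. piece n q l' B0) = {}" by blast
    qed
  qed
  moreover have "g n q = card (Gs {1..n} q)" by (simp only: g_def)
  ultimately show ?thesis using inner by (simp del: fact_Suc)
qed


lemma b_eq: "b n p = g n (Suc p)"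
proof -
  have "{s \<in> basis p. length s = n} = Gs {1..n} (Suc p)"
  proof (intro set_eqI iffI)
    fix s assume "s \<in> {s \<in> basis p. length s = n}"
    then have "is_perm s" "nlm s = Suc p" "good s" "length s = n" using basis_char by auto
    then show "s \<in> Gs {1..n} (Suc p)" unfolding Gs_def is_perm_def by simp
  next
    fix s assume "s \<in> Gs {1..n} (Suc p)"
    then have h: "distinct s" "set s = {1..n}" "good s" "nlm s = Suc p" unfolding Gs_def by auto
    then have "length s = n" using distinct_card[OF h(1)] by simp
    then have "is_perm s" using h unfolding is_perm_def by simp
    then show "s \<in> {s \<in> basis p. length s = n}" using h basis_char \<open>length s = n\<close> by auto
  qed
  then show ?thesis unfolding b_def g_def by simp
qed

lemma nlm_lt_len: "s \<noteq> [] \<Longrightarrow> nlm s < length s"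
proof (cases s)
  case (Cons x xs)
  then show ?thesis unfolding nlm_def using nl_le_length[of "{x}" xs] by simp
qed simp

lemma good_len: "distinct s \<Longrightarrow> good s \<Longrightarrow> length s \<le> 2 * nlm s"
proof (induction "length s" arbitrary: s rule: less_induct)
  case less
  show ?case
  proof (cases "s = []")
    case True then show ?thesis by simp
  next
    case False
    define M where "M = Max (set s)"
    have "M \<in> set s" unfolding M_def using False by (simp add: Max_in)
    from split_list[OF this] obtain t S where s: "s = t @ M # S" by blast
    have dd: "distinct (t @ M # S)" using less.prems s by simp
    have le: "\<forall>x\<in>set s. x \<le> M" unfolding M_def by simp
    have lt: "\<forall>x\<in>set t. x < M"
    proof
      fix x assume x: "x \<in> set t"
      then have "x \<le> M" using le s by simp
      moreover have "x \<noteq> M" using dd x by auto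
      ultimately show "x < M" by simp
    qed
    have ls: "\<forall>x\<in>set S. x < M"
    proof
      fix x assume x: "x \<in> set S"
      then have "x \<le> M" using le s by simp
      moreover have "x \<noteq> M" using dd x by auto
      ultimately show "x < M" by simp
    qed
    have gs: "good (t @ M # S)" using less.prems s by simp
    from good_split[OF dd lt ls] gs have gt: "good t" and ex: "\<exists>s\<in>set S. \<forall>x\<in>set t. x < s" by auto
    have "S \<noteq> []" using ex by auto
    have "length t \<le> 2 * nlm t" using less.hyps[of t] gt dd s by simp
    moreover have "nlm s = nlm t + length S" using nlm_split[OF lt ls] s by simp
    moreover have "1 \<le> length S" using \<open>S \<noteq> []\<close> by (cases S) auto
    ultimately show ?thesis using s by simp
  qed
qed

lemma Gs_len: "s \<in> Gs {1..n} q \<Longrightarrow> length s = n"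
  unfolding Gs_def using distinct_card by fastforce

lemma g_zero: "1 \<le> n \<Longrightarrow> g n 0 = 0"
proof -
  assume n: "1 \<le> n"
  have "Gs {1..n} 0 = {}"
  proof (rule ccontr)
    assume "Gs {1..n} 0 \<noteq> {}"
    then obtain s where s: "s \<in> Gs {1..n} 0" by blast
    then have "length s = n" by (rule Gs_len)
    then have "0 < length s" using n by simp
    then have "nlm (del 0 s) < nlm s" using s unfolding Gs_def good_def by blast
    then show False using s unfolding Gs_def by simp
  qed
  then show ?thesis unfolding g_def by simp
qed

lemma g_big: "1 \<le> n \<Longrightarrow> n \<le> q \<Longrightarrow> g n q = 0"
proof -
  assume n: "1 \<le> n" "n \<le> q"
  have "Gs {1..n} q = {}"
  proof (rule ccontr)
    assume "Gs {1..n} q \<noteq> {}"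
    then obtain s where s: "s \<in> Gs {1..n} q" by blast
    then have "length s = n" by (rule Gs_len)
    then have "nlm s < n" using nlm_lt_len[of s] n by fastforce
    then show False using s n unfolding Gs_def by simp
  qed
  then show ?thesis unfolding g_def by simp
qed

lemma g00: "g 0 0 = 1"
proof -
  have "Gs {1..0} 0 = {[]}" unfolding Gs_def good_def nlm_def by auto
  then show ?thesis unfolding g_def by simp
qed

lemma part1:
  assumes "2 * int p < int n - 2 \<or> int p > int n - 2"
  shows "b n p = 0"
proof -
  have "Gs {1..n} (Suc p) = {}"
  proof (rule ccontr)
    assume "Gs {1..n} (Suc p) \<noteq> {}"
    then obtain s where s: "s \<in> Gs {1..n} (Suc p)" by blast
    then have L: "length s = n" by (rule Gs_len)
    have h: "distinct s" "good s" "nlm s = Suc p" using s unfolding Gs_def by auto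
    have "s \<noteq> []" using h(3) unfolding nlm_def by auto
    then have "Suc p < n" using nlm_lt_len[of s] L h(3) by simp
    moreover have "n \<le> 2 * Suc p" using good_len[OF h(1,2)] L h(3) by simp
    ultimately have "int p + 2 \<le> int n" "int n \<le> 2 * int p + 2" by simp_all
    then show False using assms by linarith
  qed
  then show ?thesis unfolding b_eq g_def by simp
qed

lemma part2:
  assumes "1 < n" shows "b n (n - 2) = fact (n - 1)"
proof -
  obtain m where m: "n = m + 2" using assms by (metis add.commute less_iff_Suc_add one_add_one plus_1_eq_Suc add_Suc_right)
  have "b n (n - 2) = g (m + 2) (Suc m)" unfolding b_eq m by simp
  also have "\<dots> = (\<Sum>l<Suc m. (m choose l) * (g (m - l) (m - l) * fact (Suc l)))"
    using g_rec[of "m + 2" "Suc m"] by simp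
  also have "\<dots> = (\<Sum>l<m. (m choose l) * (g (m - l) (m - l) * fact (Suc l))) + fact (Suc m)"
    using g00 by simp
  also have "(\<Sum>l<m. (m choose l) * (g (m - l) (m - l) * fact (Suc l))) = 0"
    using g_big by (intro sum.neutral) simp
  finally show ?thesis using m by simp
qed

lemma part3:
  assumes "p < n - 2"
  shows "b n p = (\<Sum>l = 0..<p. fact (l + 1) * ((n - 2) choose l) * b (n - l - 2) (p - l - 1))"
proof -
  have n: "2 \<le> n" using assms by simp
  have "b n p = (\<Sum>l<Suc p. ((n - 2) choose l) * (g (n - 2 - l) (Suc p - Suc l) * fact (Suc l)))"
    unfolding b_eq using g_rec[OF n] by simp
  also have "\<dots> = (\<Sum>l<p. ((n - 2) choose l) * (g (n - 2 - l) (Suc p - Suc l) * fact (Suc l)))"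
    using g_zero[of "n - 2 - p"] assms by simp
  also have "\<dots> = (\<Sum>l = 0..<p. fact (l + 1) * ((n - 2) choose l) * b (n - l - 2) (p - l - 1))"
    unfolding atLeast0LessThan
  proof (rule sum.cong)
    fix l assume "l \<in> {..<p}"
    then have l: "l < p" by simp
    have "b (n - l - 2) (p - l - 1) = g (n - 2 - l) (Suc p - Suc l)"
      unfolding b_eq using l by (simp add: Suc_diff_Suc)
    then show "((n - 2) choose l) * (g (n - 2 - l) (Suc p - Suc l) * fact (Suc l))
      = fact (l + 1) * ((n - 2) choose l) * b (n - l - 2) (p - l - 1)" by simp
  qed simp
  finally show ?thesis .
qed

theorem mainTheorem7:
  shows "(\<forall>n p. (2 * int p < int n - 2 \<or> int p > int n - 2) \<longrightarrow> b n p = 0)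
    \<and> (\<forall>n. n > 1 \<longrightarrow> b n (n - 2) = fact (n - 1))
    \<and> (\<forall>n p. p < n - 2 \<longrightarrow>
          b n p = (\<Sum>l = 0..<p. fact (l + 1) * ((n - 2) choose l) * b (n - l - 2) (p - l - 1)))"
  using part1 part2 part3 by blast

end
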